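(* Let $S(x)=0$ be an arbitrary smooth closed surface in ${\bf R}^n$. Then there exists a stationary (time-independent) Lorentzian metric on ${\bf R}^n\times{\bf R}$, with inverse tensor $[g^{jk}(x)]_{j,k=0}^n$, such that $S=0$ is an ergosphere of this metric and $\{S(x)=0\}\times{\bf R}$ is an event horizon.
   Context: Coordinates $(x_0,x)$, $x_0$ time, $x\in{\bf R}^n$; the metric has signature $(1,-1,\dots,-1)$ and $g^{00}>0$. The ergosphere is the set where $g_{00}(x)=0$, equivalently where $\det[g^{jk}(x)]_{j,k=1}^n=0$. A closed smooth surface $S_0(x)=0$ gives an event horizon $\{S_0=0\}\times{\bf R}$ if it is characteristic, i.e. $\sum_{j,k=1}^n g^{jk}S_{0x_j}S_{0x_k}=0$ on $S_0=0$, and $\sum_{j=1}^n g^{0j}S_{0x_j}\neq0$ on $S_0=0$ (with $S_{0x}$ the outward normal; the interior is then a black hole if this sum is negative and a white hole if positive). *)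

theory Defs
  imports "HOL-Analysis.Analysis"
begin

coinductive smooth :: "('a::real_normed_vector \<Rightarrow> 'b::real_normed_vector) \<Rightarrow> bool" where
  smoothI: "(\<forall>x. f differentiable (at x)) \<Longrightarrow>
     (\<forall>v. smooth (\<lambda>x. frechet_derivative f (at x) v)) \<Longrightarrow> smooth f"

definition grad :: "(real^'n::finite \<Rightarrow> real) \<Rightarrow> real^'n \<Rightarrow> real^'n" where
  "grad S x = (\<chi> j. frechet_derivative S (at x) (axis j 1))"

definition smooth_closed_surface :: "(real^'n::finite \<Rightarrow> real) \<Rightarrow> bool" where
  "smooth_closed_surface S \<longleftrightarrow> smooth S \<and> {x. S x = 0} \<noteq> {} \<and>
     compact {x. S x = 0} \<and> connected {x. S x = 0} \<and>
     (\<forall>x. S x = 0 \<longrightarrow> grad S x \<noteq> 0)"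

text \<open>Index None plays the role of the time index 0; Some j is the space index j.
  A symmetric matrix has signature (1,-1,...,-1) iff it is congruent to
  diag(1,-1,...,-1).\<close>
definition lorentz_diag :: "real^('n::finite option)^('n option)" where
  "lorentz_diag = (\<chi> i k. if i = k then (if i = None then 1 else -1) else 0)"

definition lorentzian_signature :: "real^('n::finite option)^('n option) \<Rightarrow> bool" where
  "lorentzian_signature M \<longleftrightarrow> transpose M = M \<and>
     (\<exists>P :: real^('n option)^('n option). invertible P \<and> transpose P ** M ** P = (lorentz_diag :: real^('n option)^('n option)))"

definition spatial_block :: "real^('n::finite option)^('n option) \<Rightarrow> real^'n^'n" where
  "spatial_block M = (\<chi> j k. M $ Some j $ Some k)"

definition mixed_row :: "real^('n::finite option)^('n option) \<Rightarrow> real^'n" where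
  "mixed_row M = (\<chi> j. M $ None $ Some j)"

text \<open>Stationary Lorentzian metric, given by its inverse tensor g(x) = [g^{jk}(x)], j,k=0..n.\<close>
definition stationary_lorentzian :: "(real^'n \<Rightarrow> real^('n::finite option)^('n option)) \<Rightarrow> bool" where
  "stationary_lorentzian g \<longleftrightarrow> smooth g \<and>
     (\<forall>x. lorentzian_signature (g x) \<and> g x $ None $ None > 0)"

text \<open>Ergosphere: the set where g_00 = 0, equivalently det [g^{jk}]_{j,k=1..n} = 0.\<close>
definition ergosphere :: "(real^'n \<Rightarrow> real^('n::finite option)^('n option)) \<Rightarrow> (real^'n) set" where
  "ergosphere g = {x. det (spatial_block (g x)) = 0}"

definition event_horizon :: "(real^'n \<Rightarrow> real^('n::finite option)^('n option)) \<Rightarrow> (real^'n::finite \<Rightarrow> real) \<Rightarrow> bool" where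
  "event_horizon g S \<longleftrightarrow> (\<forall>x. S x = 0 \<longrightarrow>
      grad S x \<bullet> (spatial_block (g x) *v grad S x) = 0 \<and>
      mixed_row (g x) \<bullet> grad S x \<noteq> 0)"

end

theory Submission
  imports Defs
begin


lemma smoothD: "smooth f \<Longrightarrow> f differentiable (at x)"
  "smooth f \<Longrightarrow> smooth (\<lambda>x. frechet_derivative f (at x) v)"
  by (auto elim: smooth.cases)

lemma smooth_coind:
  assumes "X f"
    and "\<And>f. X f \<Longrightarrow> (\<forall>x. f differentiable (at x)) \<and>
        (\<forall>v. X (\<lambda>x. frechet_derivative f (at x) v) \<or> smooth (\<lambda>x. frechet_derivative f (at x) v))"
  shows "smooth f"
  using assms(1) by (rule smooth.coinduct) (use assms(2) in blast)

lemma fd_eq: "(f has_derivative f') (at x) \<Longrightarrow> frechet_derivative f (at x) v = f' v"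
  by (metis frechet_derivative_at)

lemma smoothH: "smooth f \<Longrightarrow> (f has_derivative frechet_derivative f (at x)) (at x)"
  using smoothD(1) frechet_derivative_works by blast

lemma smooth_const: "smooth (\<lambda>x. c)"
proof (rule smooth_coind[of "\<lambda>f. \<exists>c. f = (\<lambda>x. c)"])
  fix f :: "'a \<Rightarrow> 'b" assume "\<exists>c. f = (\<lambda>x. c)"
  then obtain c where f: "f = (\<lambda>x. c)" by auto
  have "frechet_derivative f (at x) v = 0" for x v
    unfolding f by (rule fd_eq) (rule has_derivative_const)
  then show "(\<forall>x. f differentiable (at x)) \<and>
        (\<forall>v. (\<exists>c. (\<lambda>x. frechet_derivative f (at x) v) = (\<lambda>x. c)) \<or> smooth (\<lambda>x. frechet_derivative f (at x) v))"
    unfolding f by auto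
qed auto

lemma smooth_add:
  assumes "smooth f" "smooth g"
  shows "smooth (\<lambda>x. f x + g x)"
proof (rule smooth_coind[of "\<lambda>h. \<exists>f g. smooth f \<and> smooth g \<and> h = (\<lambda>x. f x + g x)"])
  fix h :: "'a \<Rightarrow> 'b"
  assume "\<exists>f g. smooth f \<and> smooth g \<and> h = (\<lambda>x. f x + g x)"
  then obtain f g where fg: "smooth f" "smooth g" "h = (\<lambda>x. f x + g x)" by auto
  have d: "frechet_derivative h (at x) v = frechet_derivative f (at x) v + frechet_derivative g (at x) v" for x v
    unfolding fg(3) by (rule fd_eq) (intro has_derivative_add smoothH fg)
  show "(\<forall>x. h differentiable at x) \<and> (\<forall>v. (\<exists>f g. smooth f \<and> smooth g \<and> (\<lambda>x. frechet_derivative h (at x) v) = (\<lambda>x. f x + g x)) \<or> smooth (\<lambda>x. frechet_derivative h (at x) v))"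
  proof (intro conjI allI disjI1)
    show "h differentiable at x" for x unfolding fg(3) by (metis differentiable_add fg(1,2) smoothD(1))
    fix v
    show "\<exists>f g. smooth f \<and> smooth g \<and> (\<lambda>x. frechet_derivative h (at x) v) = (\<lambda>x. f x + g x)"
      by (rule exI[of _ "\<lambda>x. frechet_derivative f (at x) v"], rule exI[of _ "\<lambda>x. frechet_derivative g (at x) v"])
        (use d fg smoothD in auto)
  qed
qed (use assms in auto)

definition sp :: "(('a \<Rightarrow> real) \<times> ('a \<Rightarrow> real)) list \<Rightarrow> 'a \<Rightarrow> real" where
  "sp ps = (\<lambda>x. \<Sum>p\<leftarrow>ps. fst p x * snd p x)"

definition dps :: "(('a::real_normed_vector \<Rightarrow> real) \<times> ('a \<Rightarrow> real)) list \<Rightarrow> 'a \<Rightarrow> (('a \<Rightarrow> real) \<times> ('a \<Rightarrow> real)) list" where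
  "dps ps v = concat (map (\<lambda>p. [(fst p, \<lambda>y. frechet_derivative (snd p) (at y) v),
                                 (\<lambda>y. frechet_derivative (fst p) (at y) v, snd p)]) ps)"

lemma sp_deriv:
  assumes "\<forall>p\<in>set ps. smooth (fst p) \<and> smooth (snd p)"
  shows "(sp ps has_derivative (\<lambda>v. sp (dps ps v) x)) (at x)"
  using assms
proof (induction ps)
  case Nil
  then show ?case by (simp add: sp_def dps_def)
next
  case (Cons p ps)
  have e: "sp (p # ps) = (\<lambda>x. fst p x * snd p x + sp ps x)" by (simp add: sp_def)
  have e2: "(\<lambda>v. sp (dps (p # ps) v) x) = (\<lambda>v. (fst p x * frechet_derivative (snd p) (at x) v +
     frechet_derivative (fst p) (at x) v * snd p x) + sp (dps ps v) x)"
    by (simp add: sp_def dps_def add.assoc)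
  show ?case unfolding e e2
    by (intro has_derivative_add has_derivative_mult smoothH Cons.IH) (use Cons.prems in auto)
qed

lemma smooth_sp:
  assumes "\<forall>p\<in>set ps. smooth (fst p) \<and> smooth (snd p)"
  shows "smooth (sp ps)"
proof (rule smooth_coind[of "\<lambda>h. \<exists>ps. (\<forall>p\<in>set ps. smooth (fst p) \<and> smooth (snd p)) \<and> h = sp ps"])
  fix h :: "'a \<Rightarrow> real"
  assume "\<exists>ps. (\<forall>p\<in>set ps. smooth (fst p) \<and> smooth (snd p)) \<and> h = sp ps"
  then obtain ps where ps: "\<forall>p\<in>set ps. smooth (fst p) \<and> smooth (snd p)" "h = sp ps" by auto
  have d: "frechet_derivative h (at x) v = sp (dps ps v) x" for x v
    unfolding ps(2) by (rule fd_eq) (rule sp_deriv[OF ps(1)])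
  have sm: "\<forall>p\<in>set (dps ps v). smooth (fst p) \<and> smooth (snd p)" for v
    using ps(1) by (auto simp: dps_def intro: smoothD)
  show "(\<forall>x. h differentiable at x) \<and> (\<forall>v. (\<exists>ps. (\<forall>p\<in>set ps. smooth (fst p) \<and> smooth (snd p)) \<and> (\<lambda>x. frechet_derivative h (at x) v) = sp ps) \<or> smooth (\<lambda>x. frechet_derivative h (at x) v))"
  proof (intro conjI allI disjI1)
    show "h differentiable at x" for x unfolding ps(2) using sp_deriv[OF ps(1)] differentiable_def by blast
    fix v
    show "\<exists>ps'. (\<forall>p\<in>set ps'. smooth (fst p) \<and> smooth (snd p)) \<and> (\<lambda>x. frechet_derivative h (at x) v) = sp ps'"
      by (rule exI[of _ "dps ps v"]) (use d sm in auto)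
  qed
qed (use assms in auto)

lemma smooth_mult:
  fixes f g :: "'a::real_normed_vector \<Rightarrow> real"
  assumes "smooth f" "smooth g"
  shows "smooth (\<lambda>x. f x * g x)"
proof -
  have "smooth (sp [(f, g)])" by (rule smooth_sp) (use assms in auto)
  then show ?thesis by (simp add: sp_def)
qed

lemma smooth_sum:
  assumes "\<And>i. i \<in> A \<Longrightarrow> smooth (f i)"
  shows "smooth (\<lambda>x. \<Sum>i\<in>A. f i x)"
  using assms
proof (induction A rule: infinite_finite_induct)
  case (infinite A) then show ?case by (simp add: smooth_const)
next
  case empty then show ?case by (simp add: smooth_const)
next
  case (insert a A) then show ?case by (simp add: smooth_add)
qed

lemma norm_le_sum_cart: "norm (x::'b::real_normed_vector^'m) \<le> (\<Sum>i\<in>UNIV. norm (x $ i))"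
  unfolding norm_vec_def by (rule L2_set_le_sum) simp

lemma bounded_linear_vec_lambda:
  assumes "\<And>i. bounded_linear (D i)"
  shows "bounded_linear (\<lambda>v. (\<chi> i. D i v) :: 'b::real_normed_vector^'m)"
proof -
  have "\<forall>i. \<exists>K. \<forall>x. norm (D i x) \<le> norm x * K"
    using assms bounded_linear.bounded by blast
  then obtain K where K: "\<And>i x. norm (D i x) \<le> norm x * K i" by metis
  show ?thesis
  proof (rule bounded_linear_intro[where K="\<Sum>i\<in>UNIV. K i"])
    fix x y show "(\<chi> i. D i (x + y)) = (\<chi> i. D i x) + (\<chi> i. D i y)"
      using assms by (simp add: vec_eq_iff linear_add bounded_linear.linear)
  next
    fix r x show "(\<chi> i. D i (r *\<^sub>R x)) = r *\<^sub>R (\<chi> i. D i x)"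
      using assms by (simp add: vec_eq_iff linear_scale bounded_linear.linear)
  next
    fix x
    have "norm (\<chi> i. D i x) \<le> (\<Sum>i\<in>UNIV. norm ((\<chi> i. D i x) $ i))" by (rule norm_le_sum_cart)
    also have "\<dots> \<le> (\<Sum>i\<in>UNIV. norm x * K i)" by (intro sum_mono) (simp add: K)
    also have "\<dots> = norm x * (\<Sum>i\<in>UNIV. K i)" by (simp add: sum_distrib_left)
    finally show "norm (\<chi> i. D i x) \<le> norm x * (\<Sum>i\<in>UNIV. K i)" .
  qed
qed

lemma vec_has_derivative:
  fixes f :: "'a::real_normed_vector \<Rightarrow> 'b::real_normed_vector^'m"
  assumes "\<And>i. ((\<lambda>x. f x $ i) has_derivative D i) (at a)"
  shows "(f has_derivative (\<lambda>v. \<chi> i. D i v)) (at a)"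
proof -
  have bl: "bounded_linear (D i)" for i using assms has_derivative_bounded_linear by blast
  have t: "((\<lambda>y. (1 / norm (y - a)) *\<^sub>R ((f y $ i) - (f a $ i + D i (y - a)))) \<longlongrightarrow> 0) (at a within UNIV)" for i
    using assms[of i] unfolding has_derivative_within by blast
  show ?thesis unfolding has_derivative_within
  proof
    show "bounded_linear (\<lambda>v. \<chi> i. D i v)" by (rule bounded_linear_vec_lambda[OF bl])
    show "((\<lambda>y. (1 / norm (y - a)) *\<^sub>R (f y - (f a + (\<chi> i. D i (y - a))))) \<longlongrightarrow> 0) (at a within UNIV)"
      by (rule vec_tendstoI) (use t in simp)
  qed
qed

lemma smooth_vec:
  fixes f :: "'a::real_normed_vector \<Rightarrow> 'b::real_normed_vector^'m"
  assumes "\<And>i. smooth (\<lambda>x. f x $ i)"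
  shows "smooth f"
proof (rule smooth_coind[of "\<lambda>f. \<forall>i. smooth (\<lambda>x. f x $ i)"])
  fix f :: "'a \<Rightarrow> 'b^'m"
  assume a: "\<forall>i. smooth (\<lambda>x. f x $ i)"
  have hd: "(f has_derivative (\<lambda>v. \<chi> i. frechet_derivative (\<lambda>x. f x $ i) (at x) v)) (at x)" for x
    by (rule vec_has_derivative) (use a smoothH in blast)
  have d: "frechet_derivative f (at x) v $ i = frechet_derivative (\<lambda>x. f x $ i) (at x) v" for x v i
    using fd_eq[OF hd] by simp
  show "(\<forall>x. f differentiable at x) \<and> (\<forall>v. (\<forall>i. smooth (\<lambda>x. frechet_derivative f (at x) v $ i)) \<or> smooth (\<lambda>x. frechet_derivative f (at x) v))"
    using hd a smoothD(2) unfolding d differentiable_def by blast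
qed (use assms in auto)



lemma sum_option: "(\<Sum>i\<in>(UNIV::'n::finite option set). f i) = f None + (\<Sum>j\<in>UNIV. f (Some j))"
  by (subst UNIV_option_conv) (simp add: sum.reindex)

definition diagm :: "('a::finite \<Rightarrow> real) \<Rightarrow> real^'a^'a" where
  "diagm d = (\<chi> i k. if i = k then d i else 0)"

definition Rm :: "real^'n::finite \<Rightarrow> real^('n option)^('n option)" where
  "Rm w = (\<chi> i k. case i of None \<Rightarrow> (case k of None \<Rightarrow> 1 | Some k \<Rightarrow> w $ k)
                         | Some j \<Rightarrow> (case k of None \<Rightarrow> 0 | Some k \<Rightarrow> (if j = k then 1 else 0)))"

definition Gm :: "real^'n::finite \<Rightarrow> real \<Rightarrow> real^('n option)^('n option)" where
  "Gm w l = (\<chi> i k. case i of None \<Rightarrow> (case k of None \<Rightarrow> 1 | Some k \<Rightarrow> w $ k)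
                         | Some j \<Rightarrow> (case k of None \<Rightarrow> w $ j | Some k \<Rightarrow> w $ j * w $ k - (if j = k then l else 0)))"

lemma diagm_nth[simp]: "diagm d $ i $ k = (if i = k then d i else 0)"
  by (simp add: diagm_def)

lemma mm_nth: "(A ** B) $ i $ k = (\<Sum>j\<in>UNIV. A $ i $ j * B $ j $ k)"
  by (simp add: matrix_matrix_mult_def)

lemma diagm_mult: "diagm a ** diagm b = diagm (\<lambda>i. a i * b i)"
proof -
  have "(\<Sum>j\<in>UNIV. (if i = j then a i else 0) * (if j = k then b j else 0)) = (if i = k then a i * b i else 0)" for i k
  proof -
    have "(\<Sum>j\<in>UNIV. (if i = j then a i else 0) * (if j = k then b j else 0)) = (\<Sum>j\<in>UNIV. if j = i then a i * (if j = k then b j else 0) else 0)"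
      by (rule sum.cong) auto
    also have "\<dots> = a i * (if i = k then b i else 0)" by (simp add: sum.delta)
    finally show ?thesis by simp
  qed
  then show ?thesis by (simp add: vec_eq_iff mm_nth)
qed

lemma diagm_transpose: "transpose (diagm a) = diagm a"
  by (simp add: transpose_def vec_eq_iff)

lemma diagm_one: "diagm (\<lambda>i. 1) = mat 1"
  by (simp add: mat_def vec_eq_iff)

lemma diagm_invertible: "(\<And>i. a i \<noteq> 0) \<Longrightarrow> invertible (diagm a)"
  unfolding invertible_def
  by (rule exI[of _ "diagm (\<lambda>i. 1 / a i)"]) (simp add: diagm_mult diagm_one)

lemma if01[simp]: "(if P then (1::real) else 0) * x = (if P then x else 0)"
  "x * (if P then (1::real) else 0) = (if P then x else 0)"
  by auto

lemma Rm_nth[simp]: "Rm w $ None $ None = 1" "Rm w $ None $ Some k = w $ k" "Rm w $ Some j $ None = 0"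
  "Rm w $ Some j $ Some k = (if j = k then 1 else 0)"
  by (simp_all add: Rm_def)

lemma Gm_nth[simp]: "Gm w l $ None $ None = 1" "Gm w l $ None $ Some k = w $ k" "Gm w l $ Some j $ None = w $ j"
  "Gm w l $ Some j $ Some k = w $ j * w $ k - (if j = k then l else 0)"
  by (simp_all add: Gm_def)

lemma optvec_eqI: fixes A B :: "real^('n::finite option)^('n option)"
  assumes "A $ None $ None = B $ None $ None" "\<And>k. A $ None $ Some k = B $ None $ Some k"
    "\<And>j. A $ Some j $ None = B $ Some j $ None" "\<And>j k. A $ Some j $ Some k = B $ Some j $ Some k"
  shows "A = B"
proof -
  have "A $ i $ k = B $ i $ k" for i k using assms by (cases i; cases k) auto
  then show ?thesis by (simp add: vec_eq_iff)
qed

lemma Rm_mult: "Rm a ** Rm b = Rm (a + b)"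
  by (rule optvec_eqI) (simp_all add: mm_nth sum_option sum.delta sum.delta')

lemma Rm_zero: "Rm 0 = mat 1"
  by (rule optvec_eqI) (simp_all add: mat_def)

lemma Gm_fact: "Gm w l = transpose (Rm w) ** diagm (\<lambda>i. if i = None then 1 else - l) ** Rm w"
  by (rule optvec_eqI) (simp_all add: mm_nth sum_option transpose_def sum.delta sum.delta')

lemma Gm_lorentz:
  fixes w :: "real^'n::finite"
  assumes l: "l > 0"
  shows "lorentzian_signature (Gm w l)"
  unfolding lorentzian_signature_def
proof
  show "transpose (Gm w l) = Gm w l"
    by (rule optvec_eqI) (simp_all add: transpose_def mult.commute)
  define e :: "'n option \<Rightarrow> real" where "e = (\<lambda>i. if i = None then 1 else 1 / sqrt l)"
  define d :: "'n option \<Rightarrow> real" where "d = (\<lambda>i. if i = None then 1 else - l)"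
  define P where "P = Rm (-w) ** diagm e"
  have inv: "invertible P" unfolding P_def
  proof (rule invertible_mult)
    show "invertible (Rm (- w))" unfolding invertible_def
      by (rule exI[of _ "Rm w"]) (simp add: Rm_mult Rm_zero)
    show "invertible (diagm e)" by (rule diagm_invertible) (use l in \<open>simp add: e_def\<close>)
  qed
  have "transpose P ** Gm w l ** P = diagm e ** (transpose (Rm w ** Rm (-w)) ** diagm d ** (Rm w ** Rm (-w))) ** diagm e"
    by (simp add: P_def Gm_fact d_def matrix_transpose_mul matrix_mul_assoc diagm_transpose)
  also have "\<dots> = diagm (\<lambda>i. e i * d i * e i)"
    by (simp add: Rm_mult Rm_zero transpose_mat diagm_mult)
  also have "\<dots> = lorentz_diag"
  proof -
    have "e i * d i * e i = (if i = None then 1 else -1)" for i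
      using l by (cases i) (auto simp: e_def d_def power2_eq_square[symmetric])
    then show ?thesis by (simp add: lorentz_diag_def diagm_def)
  qed
  finally have fin: "transpose P ** Gm w l ** P = lorentz_diag" .
  show "\<exists>P::real^('n option)^('n option). invertible P \<and> transpose P ** Gm w l ** P = lorentz_diag"
    using inv fin by blast
qed

lemma sb_mult: "spatial_block (Gm w l) *v y = (w \<bullet> y) *\<^sub>R w - l *\<^sub>R y"
proof -
  have "(\<Sum>k\<in>UNIV. (w $ j * w $ k - (if j = k then l else 0)) * y $ k) = w $ j * (w \<bullet> y) - l * y $ j" for j
  proof -
    have "(\<Sum>k\<in>UNIV. (w $ j * w $ k - (if j = k then l else 0)) * y $ k)
        = (\<Sum>k\<in>UNIV. w $ j * (w $ k * y $ k)) - (\<Sum>k\<in>UNIV. if k = j then l * y $ k else 0)"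
    proof -
      have "(\<Sum>k\<in>UNIV. (w $ j * w $ k - (if j = k then l else 0)) * y $ k)
        = (\<Sum>k\<in>UNIV. w $ j * (w $ k * y $ k) - (if k = j then l * y $ k else 0))"
        by (rule sum.cong) (auto simp: algebra_simps)
      then show ?thesis by (simp add: sum_subtractf)
    qed
    also have "\<dots> = w $ j * (w \<bullet> y) - l * y $ j"
      by (simp add: sum.delta inner_vec_def sum_distrib_left[symmetric])
    finally show ?thesis .
  qed
  then show ?thesis by (simp add: vec_eq_iff matrix_vector_mult_def spatial_block_def)
qed

lemma det_zero_iff: "det (M::real^'m^'m) = 0 \<longleftrightarrow> (\<exists>y. y \<noteq> 0 \<and> M *v y = 0)"
  using invertible_det_nz[of M] invertible_left_inverse[of M] matrix_left_invertible_ker[of M] by blast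

lemma Gm_det:
  fixes w :: "real^'n::finite"
  assumes l: "l = w \<bullet> w + s\<^sup>2" "l > 0"
  shows "det (spatial_block (Gm w l)) = 0 \<longleftrightarrow> s = 0"
proof
  assume "det (spatial_block (Gm w l)) = 0"
  then obtain y where y: "y \<noteq> 0" "(w \<bullet> y) *\<^sub>R w - l *\<^sub>R y = 0" using det_zero_iff sb_mult by metis
  have "w \<bullet> ((w \<bullet> y) *\<^sub>R w - l *\<^sub>R y) = 0" using y by simp
  then have "(w \<bullet> y) * (w \<bullet> w - l) = 0" by (simp add: inner_diff_right algebra_simps)
  then have "(w \<bullet> y) * s\<^sup>2 = 0" using l by simp
  moreover have "w \<bullet> y \<noteq> 0"
  proof
    assume "w \<bullet> y = 0"
    then have "l *\<^sub>R y = 0" using y by simp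
    then show False using y l by simp
  qed
  ultimately show "s = 0" by simp
next
  assume "s = 0"
  then have "w \<noteq> 0" using l by auto
  moreover have "spatial_block (Gm w l) *v w = 0" using l \<open>s = 0\<close> by (simp add: sb_mult)
  ultimately show "det (spatial_block (Gm w l)) = 0" using det_zero_iff by blast
qed

lemma Gm_mixed: "mixed_row (Gm w l) = w"
  by (simp add: mixed_row_def vec_eq_iff)

lemma Gm_char:
  assumes "l = w \<bullet> w + s\<^sup>2"
  shows "w \<bullet> (spatial_block (Gm w l) *v w) = - s\<^sup>2 * (w \<bullet> w)"
  using assms by (simp add: sb_mult inner_diff_right algebra_simps power2_eq_square)


lemma smooth_grad: "smooth S \<Longrightarrow> smooth (\<lambda>x. grad S x $ k)"
  unfolding grad_def by (simp add: smoothD(2))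

theorem proposition2p5:
  fixes S :: "real^'n \<Rightarrow> real"
  assumes "smooth_closed_surface S"
  shows "\<exists>g :: real^'n \<Rightarrow> real^('n option)^('n option).
           stationary_lorentzian g \<and> ergosphere g = {x. S x = 0} \<and> event_horizon g S"
proof -
  have sS: "smooth S" and reg: "\<And>x. S x = 0 \<Longrightarrow> grad S x \<noteq> 0"
    using assms unfolding smooth_closed_surface_def by auto
  define L where "L = (\<lambda>x. grad S x \<bullet> grad S x + (S x)\<^sup>2)"
  define g where "g = (\<lambda>x. Gm (grad S x) (L x))"
  have Lpos: "L x > 0" for x
  proof (cases "S x = 0")
    case True
    then have "grad S x \<bullet> grad S x > 0" using reg by simp
    then show ?thesis unfolding L_def by (simp add: add_pos_nonneg)
  next
    case False
    then show ?thesis unfolding L_def by (simp add: add_nonneg_pos)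
  qed
  have sL: "smooth L"
  proof -
    have "L = (\<lambda>x. (\<Sum>j\<in>UNIV. grad S x $ j * grad S x $ j) + S x * S x)"
      by (simp add: L_def inner_vec_def power2_eq_square fun_eq_iff)
    then show ?thesis
      by (simp add: smooth_add smooth_sum smooth_mult smooth_grad sS)
  qed
  have sg: "smooth g"
  proof (rule smooth_vec)
    fix i
    show "smooth (\<lambda>x. g x $ i)"
    proof (rule smooth_vec)
      fix k
      show "smooth (\<lambda>x. g x $ i $ k)"
      proof (cases i; cases k)
        fix j m assume "i = Some j" "k = Some m"
        moreover have "smooth (\<lambda>x. grad S x $ j * grad S x $ m + (- 1) * (if j = m then L x else 0))"
          by (intro smooth_add smooth_mult smooth_grad sS smooth_const) (cases "j = m"; simp add: sL smooth_const)
        ultimately show ?thesis by (simp add: g_def)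
      qed (simp_all add: g_def smooth_const smooth_grad sS)
    qed
  qed
  have "stationary_lorentzian g"
    unfolding stationary_lorentzian_def using sg by (auto simp: g_def intro!: Gm_lorentz Lpos)
  moreover have "ergosphere g = {x. S x = 0}"
    unfolding ergosphere_def g_def using Gm_det[OF L_def[THEN fun_cong] Lpos] by simp
  moreover have "event_horizon g S"
    unfolding event_horizon_def g_def
    using Gm_char[OF L_def[THEN fun_cong]] reg by (auto simp: Gm_mixed)
  ultimately show ?thesis by blast
qed

end
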